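(* There exist absolute constants $q_0$ and $C>0$ such that the following holds. Let $q\geq q_0$ be an integer, let $r$ be an integer with $1\leq r\leq\exp(q^{1/3})$, let $\delta\in\mathbb{N}$ with $\delta\leq\frac{\log q}{\log2}$, and let $n$ be a positive integer. Put $H_r:=\sum_{d=1}^r\frac1d$. Then \[ \frac{1}{n!}\sum_{\pi\in S_n}\left(\sum_{d=1}^r c_d(\pi^q)\right)^{\delta}\leq \begin{cases} C\,\sigma_0(q)H_r & \text{if }\delta=1,\\ C\left(\sigma_0(q)^2H_r^2+\sigma_1(q)H_r\right) & \text{if }\delta=2,\\ C\,q^2H_r & \text{if }\delta=3,\\ C\,q^{\delta-1}H_r^2 & \text{if }\delta\geq4. \end{cases} \]
   Context: For a permutation $\sigma\in S_n$ and $d\geq1$, $c_d(\sigma)$ is the number of $d$-cycles of $\sigma$ (zero if $d>n$). For real $\alpha$, $\sigma_\alpha(q)=\sum_{d\mid q}d^\alpha$. $\mathbb{N}$ denotes the positive integers. *)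

theory Defs
  imports Complex_Main "HOL-Combinatorics.Permutations" "HOL-Combinatorics.Orbits"
begin

text \<open>Permutations of S_n are modelled as permutations of {..<n}.\<close>
definition cycle_count :: "nat \<Rightarrow> (nat \<Rightarrow> nat) \<Rightarrow> nat \<Rightarrow> nat" where
  "cycle_count n \<sigma> d = card {orbit \<sigma> x | x. x < n \<and> card (orbit \<sigma> x) = d}"

definition divisor_sigma :: "real \<Rightarrow> nat \<Rightarrow> real" where
  "divisor_sigma \<alpha> q = (\<Sum>d\<in>{d. d dvd q}. real d powr \<alpha>)"

definition harmonic_num :: "nat \<Rightarrow> real" where
  "harmonic_num r = (\<Sum>d=1..r. 1 / real d)"

end

theory Submission
  imports Defs "HOL-Combinatorics.Permutations" "HOL-Combinatorics.Orbits" "HOL-Combinatorics.Cycles"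
    "HOL-Computational_Algebra.Primes" "HOL-Analysis.Harmonic_Numbers"
begin


definition XX :: "(nat \<Rightarrow> real) \<Rightarrow> nat set \<Rightarrow> (nat \<Rightarrow> nat) \<Rightarrow> real" where
  "XX G S p = (\<Sum>x\<in>S. G (card (orbit p x)))"

definition ww :: "(nat \<Rightarrow> real) \<Rightarrow> nat \<Rightarrow> real" where
  "ww G L = real L * G L"

lemma perm_self_orbit: "p permutes S \<Longrightarrow> finite S \<Longrightarrow> x \<in> orbit p x"
  by (rule permutation_self_in_orbit) (auto simp: permutation_permutes)

lemma perm_orbit_eq: "p permutes S \<Longrightarrow> finite S \<Longrightarrow> y \<in> orbit p x \<Longrightarrow> orbit p y = orbit p x"
  by (metis cyclic_on_orbit orbit_cyclic_eq3)

lemma conj_orbit: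
  assumes p: "p permutes S" and fin: "finite S"
  shows "orbit (Transposition.transpose b c \<circ> p \<circ> Transposition.transpose b c) (Transposition.transpose b c x) = Transposition.transpose b c ` orbit p x"
proof -
  have "Transposition.transpose b c ` orbit p x = orbit (Transposition.transpose b c \<circ> p \<circ> Transposition.transpose b c) (Transposition.transpose b c x)"
    by (rule orbit_inverse) (auto simp: perm_self_orbit[OF p fin])
  thus ?thesis by simp
qed

lemma conj_perm: "p permutes S \<Longrightarrow> b \<in> S \<Longrightarrow> c \<in> S \<Longrightarrow> (Transposition.transpose b c \<circ> p \<circ> Transposition.transpose b c) permutes S"
  by (intro permutes_compose permutes_swap_id) auto

lemma conj_card_orbit:
  assumes p: "p permutes S" and fin: "finite S"
  shows "card (orbit (Transposition.transpose b c \<circ> p \<circ> Transposition.transpose b c) (Transposition.transpose b c x)) = card (orbit p x)"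
  unfolding conj_orbit[OF p fin] by (rule card_image) (rule inj_on_subset[OF inj_transpose], simp)

lemma conj_XX:
  assumes p: "p permutes S" and fin: "finite S" and b: "b \<in> S" and c: "c \<in> S"
  shows "XX G S (Transposition.transpose b c \<circ> p \<circ> Transposition.transpose b c) = XX G S p"
proof -
  let ?t = "Transposition.transpose b c"
  have bij: "bij_betw ?t S S" using permutes_swap_id[OF b c] by (rule permutes_imp_bij)
  have "XX G S (?t \<circ> p \<circ> ?t) = (\<Sum>x\<in>S. G (card (orbit (?t \<circ> p \<circ> ?t) (?t x))))"
    unfolding XX_def by (rule sum.reindex_bij_betw[OF bij, symmetric])
  also have "\<dots> = XX G S p" unfolding XX_def conj_card_orbit[OF p fin] ..
  finally show ?thesis .
qed

lemma sym_perm: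
  assumes fin: "finite S" and b: "b \<in> S" and c: "c \<in> S"
  shows "(\<Sum>p\<in>{p. p permutes S}. \<Phi> (card (orbit p b)) (XX G S p))
       = (\<Sum>p\<in>{p. p permutes S}. \<Phi> (card (orbit p c)) (XX G S p))"
proof -
  let ?t = "Transposition.transpose b c"
  let ?h = "\<lambda>p. ?t \<circ> p \<circ> ?t"
  show ?thesis
  proof (rule sum.reindex_bij_witness[of _ ?h ?h])
    fix p assume "p \<in> {p. p permutes S}"
    hence p: "p permutes S" by simp
    show "?h (?h p) = p" by (simp add: fun_eq_iff)
    show "?h p \<in> {p. p permutes S}" using conj_perm[OF p b c] by simp
    have "card (orbit (?h p) c) = card (orbit (?h p) (?t b))" by simp
    also have "\<dots> = card (orbit p b)" by (rule conj_card_orbit[OF p fin])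
    finally show "\<Phi> (card (orbit (?h p) c)) (XX G S (?h p)) = \<Phi> (card (orbit p b)) (XX G S p)"
      using conj_XX[OF p fin b c] by simp
  next
    fix p assume "p \<in> {p. p permutes S}"
    hence p: "p permutes S" by simp
    show "?h (?h p) = p" by (simp add: fun_eq_iff)
    show "?h p \<in> {p. p permutes S}" using conj_perm[OF p b c] by simp
  qed
qed


lemma ins_orbit:
  assumes fin: "finite S" and aS: "a \<notin> S" and p: "p permutes S" and b: "b \<in> S"
  defines "\<pi> \<equiv> Transposition.transpose a b \<circ> p"
  shows "orbit \<pi> a = insert a (orbit p b)"
    and "\<And>x. x \<in> orbit p b \<Longrightarrow> orbit \<pi> x = insert a (orbit p b)"
    and "\<And>x. x \<in> S \<Longrightarrow> x \<notin> orbit p b \<Longrightarrow> orbit \<pi> x = orbit p x"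
proof -
  have pa: "p a = a" using p aS by (rule permutes_not_in)
  have pS: "\<And>y. y \<in> S \<Longrightarrow> p y \<in> S" using p by (simp add: permutes_in_image)
  have pia: "\<pi> a = b" unfolding \<pi>_def using pa by simp
  have piy: "\<And>y. y \<in> S \<Longrightarrow> \<pi> y = (if p y = b then a else p y)"
    unfolding \<pi>_def using pS aS by (auto simp: Transposition.transpose_def)
  have piperm: "\<pi> permutes insert a S" unfolding \<pi>_def
    by (intro permutes_compose permutes_swap_id permutes_subset[OF p]) (use b in auto)
  have fin2: "finite (insert a S)" using fin by simp
  have OS: "orbit p b \<subseteq> S" using p b by (rule permutes_orbit_subset)
  have bO: "b \<in> orbit p b" by (rule perm_self_orbit[OF p fin])
  have sub1: "orbit \<pi> a \<subseteq> insert a (orbit p b)"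
  proof
    fix y assume "y \<in> orbit \<pi> a"
    thus "y \<in> insert a (orbit p b)"
    proof induction
      case base thus ?case using pia bO by simp
    next
      case (step y)
      show ?case
      proof (cases "y = a")
        case True thus ?thesis using pia bO by simp
      next
        case False
        hence yO: "y \<in> orbit p b" using step by simp
        hence "y \<in> S" using OS by auto
        thus ?thesis using piy[of y] yO by (auto intro: orbit.step)
      qed
    qed
  qed
  have bpi: "b \<in> orbit \<pi> a" using pia by (metis orbit.base)
  have sub2: "orbit p b \<subseteq> orbit \<pi> a"
  proof
    fix y assume "y \<in> orbit p b"
    thus "y \<in> orbit \<pi> a"
    proof induction
      case base
      show ?case
      proof (cases "p b = b")
        case True thus ?thesis using bpi by simp
      next
        case False
        hence "\<pi> b = p b" using piy[OF b] by simp
        thus ?thesis using bpi by (metis orbit.step)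
      qed
    next
      case (step y)
      hence yS: "y \<in> S" using OS by auto
      show ?case
      proof (cases "p y = b")
        case True thus ?thesis using bpi by simp
      next
        case False
        hence "\<pi> y = p y" using piy[OF yS] by simp
        thus ?thesis using step by (metis orbit.step)
      qed
    qed
  qed
  have api: "a \<in> orbit \<pi> a" by (rule perm_self_orbit[OF piperm fin2])
  show eqa: "orbit \<pi> a = insert a (orbit p b)" using sub1 sub2 api by auto
  show "\<And>x. x \<in> orbit p b \<Longrightarrow> orbit \<pi> x = insert a (orbit p b)"
    using perm_orbit_eq[OF piperm fin2] eqa sub2 by auto
  show "\<And>x. x \<in> S \<Longrightarrow> x \<notin> orbit p b \<Longrightarrow> orbit \<pi> x = orbit p x"
  proof -
    fix x assume xS: "x \<in> S" and xO: "x \<notin> orbit p b"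
    show "orbit \<pi> x = orbit p x"
    proof (rule orbit_cong)
      show "x \<in> orbit p x" by (rule perm_self_orbit[OF p fin])
      fix s assume s: "s \<in> orbit p x"
      have sS: "s \<in> S" using s permutes_orbit_subset[OF p xS] by auto
      have "p s \<noteq> b"
      proof
        assume "p s = b"
        hence "b \<in> orbit p x" using s by (metis orbit.step)
        hence "orbit p b = orbit p x" by (rule perm_orbit_eq[OF p fin])
        thus False using xO perm_self_orbit[OF p fin, of x] by simp
      qed
      thus "\<pi> s = p s" using piy[OF sS] by simp
    qed
  qed
qed

lemma ins_XX:
  assumes fin: "finite S" and aS: "a \<notin> S" and p: "p permutes S" and b: "b \<in> S"
  defines "\<pi> \<equiv> Transposition.transpose a b \<circ> p"
  shows "card (orbit \<pi> a) = Suc (card (orbit p b))"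
    and "XX G (insert a S) \<pi> - ww G (card (orbit \<pi> a)) = XX G S p - ww G (card (orbit p b))"
proof -
  note O = ins_orbit[OF fin aS p b, folded \<pi>_def]
  have OS: "orbit p b \<subseteq> S" using p b by (rule permutes_orbit_subset)
  have finO: "finite (orbit p b)" using OS fin by (rule finite_subset)
  have aO: "a \<notin> orbit p b" using OS aS by auto
  show c1: "card (orbit \<pi> a) = Suc (card (orbit p b))" unfolding O(1) using finO aO by simp
  let ?c = "card (orbit p b)"
  let ?R = "(\<Sum>x\<in>S - orbit p b. G (card (orbit p x)))"
  have "XX G (insert a S) \<pi> = G (card (orbit \<pi> a)) + (\<Sum>x\<in>S. G (card (orbit \<pi> x)))"
    unfolding XX_def using fin aS by simp
  also have "(\<Sum>x\<in>S. G (card (orbit \<pi> x))) = (\<Sum>x\<in>S - orbit p b. G (card (orbit \<pi> x))) + (\<Sum>x\<in>orbit p b. G (card (orbit \<pi> x)))"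
    using OS fin by (rule sum.subset_diff)
  also have "(\<Sum>x\<in>S - orbit p b. G (card (orbit \<pi> x))) = ?R"
    using O(3) by (intro sum.cong) auto
  also have "(\<Sum>x\<in>orbit p b. G (card (orbit \<pi> x))) = real ?c * G (Suc ?c)"
    using O(2) c1 O(1) by simp
  finally have e1: "XX G (insert a S) \<pi> = G (Suc ?c) + ?R + real ?c * G (Suc ?c)" using c1 by simp
  have "XX G S p = ?R + (\<Sum>x\<in>orbit p b. G (card (orbit p x)))"
    unfolding XX_def using OS fin by (rule sum.subset_diff)
  also have "(\<Sum>x\<in>orbit p b. G (card (orbit p x))) = real ?c * G ?c"
    using perm_orbit_eq[OF p fin] by simp
  finally have e2: "XX G S p = ?R + real ?c * G ?c" .
  show "XX G (insert a S) \<pi> - ww G (card (orbit \<pi> a)) = XX G S p - ww G (card (orbit p b))"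
    unfolding e1 e2 c1 ww_def by (simp add: algebra_simps)
qed

lemma ins_XX_same:
  assumes fin: "finite S" and aS: "a \<notin> S" and p: "p permutes S"
  shows "card (orbit p a) = 1" and "XX G (insert a S) p - ww G (card (orbit p a)) = XX G S p"
proof -
  have pa: "p a = a" using p aS by (rule permutes_not_in)
  hence "orbit p a = {a}" by (simp add: orbit_eq_singleton_iff)
  thus c: "card (orbit p a) = 1" by simp
  show "XX G (insert a S) p - ww G (card (orbit p a)) = XX G S p"
    unfolding XX_def ww_def c using fin aS c by simp
qed


definition VV :: "(nat \<Rightarrow> real) \<Rightarrow> nat \<Rightarrow> (real \<Rightarrow> real) \<Rightarrow> real" where
  "VV G m \<phi> = (\<Sum>p\<in>{p. p permutes {..<m}}. \<phi> (XX G {..<m} p))"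

definition UU :: "(nat \<Rightarrow> real) \<Rightarrow> nat \<Rightarrow> (nat \<Rightarrow> real \<Rightarrow> real) \<Rightarrow> real" where
  "UU G m F = (\<Sum>p\<in>{p. p permutes {..<Suc m}}.
      F (card (orbit p m)) (XX G {..<Suc m} p - ww G (card (orbit p m))))"

lemma UU_rec0:
  "UU G m F = VV G m (F 1) + (\<Sum>b<m. \<Sum>p\<in>{p. p permutes {..<m}}.
       F (Suc (card (orbit p b))) (XX G {..<m} p - ww G (card (orbit p b))))"
proof -
  have ins: "{..<Suc m} = insert m {..<m}" by auto
  let ?f = "\<lambda>p. F (card (orbit p m)) (XX G (insert m {..<m}) p - ww G (card (orbit p m)))"
  have "UU G m F = sum ?f {p. p permutes insert m {..<m}}" unfolding UU_def ins ..
  also have "\<dots> = (\<Sum>b\<in>insert m {..<m}. \<Sum>q\<in>{p. p permutes {..<m}}. ?f (Transposition.transpose m b \<circ> q))"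
    by (rule sum_over_permutations_insert) auto
  also have "\<dots> = (\<Sum>q\<in>{p. p permutes {..<m}}. ?f (Transposition.transpose m m \<circ> q)) + 
      (\<Sum>b<m. \<Sum>q\<in>{p. p permutes {..<m}}. ?f (Transposition.transpose m b \<circ> q))"
    by simp
  also have "(\<Sum>q\<in>{p. p permutes {..<m}}. ?f (Transposition.transpose m m \<circ> q)) = VV G m (F 1)"
    unfolding VV_def using ins_XX_same[of "{..<m}" m] by (intro sum.cong) auto
  also have "(\<Sum>b<m. \<Sum>q\<in>{p. p permutes {..<m}}. ?f (Transposition.transpose m b \<circ> q)) =
      (\<Sum>b<m. \<Sum>p\<in>{p. p permutes {..<m}}.
       F (Suc (card (orbit p b))) (XX G {..<m} p - ww G (card (orbit p b))))"
    using ins_XX[of "{..<m}" m] by (intro sum.cong) auto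
  finally show ?thesis .
qed

lemma UU_rec:
  "UU G (Suc m) F = VV G (Suc m) (F 1) + real (Suc m) * UU G m (\<lambda>L y. F (Suc L) y)"
proof -
  have "\<And>b. b < Suc m \<Longrightarrow> (\<Sum>p\<in>{p. p permutes {..<Suc m}}.
       F (Suc (card (orbit p b))) (XX G {..<Suc m} p - ww G (card (orbit p b))))
     = (\<Sum>p\<in>{p. p permutes {..<Suc m}}.
       F (Suc (card (orbit p m))) (XX G {..<Suc m} p - ww G (card (orbit p m))))"
    by (rule sym_perm[where \<Phi> = "\<lambda>L y. F (Suc L) (y - ww G L)"]) auto
  hence "(\<Sum>b<Suc m. \<Sum>p\<in>{p. p permutes {..<Suc m}}.
       F (Suc (card (orbit p b))) (XX G {..<Suc m} p - ww G (card (orbit p b))))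
     = (\<Sum>b<Suc m. UU G m (\<lambda>L y. F (Suc L) y))"
  proof (intro sum.cong[OF refl])
    fix b assume b: "b \<in> {..<Suc m}"
    show "(\<Sum>p\<in>{p. p permutes {..<Suc m}}.
       F (Suc (card (orbit p b))) (XX G {..<Suc m} p - ww G (card (orbit p b)))) = UU G m (\<lambda>L y. F (Suc L) y)"
      using \<open>\<And>b. b < Suc m \<Longrightarrow> _\<close>[of b] b unfolding UU_def by auto
  qed
  thus ?thesis unfolding UU_rec0[of G "Suc m"] by simp
qed

lemma UU_0: "UU G 0 F = VV G 0 (F 1)"
  using UU_rec0[of G 0 F] by simp

definition uu where "uu G m F = UU G m F / fact m"
definition vv where "vv G m \<phi> = VV G m \<phi> / fact m"

lemma uu_sum: "uu G m F = (\<Sum>i\<le>m. vv G (m - i) (F (Suc i)))"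
proof (induction m arbitrary: F)
  case 0 thus ?case by (simp add: uu_def vv_def UU_0)
next
  case (Suc m)
  have "uu G (Suc m) F = vv G (Suc m) (F 1) + uu G m (\<lambda>L y. F (Suc L) y)"
  proof -
    have f: "fact (Suc m) = real (Suc m) * (fact m :: real)" by simp
    have "fact m > (0::real)" by simp
    hence "(VV G (Suc m) (F 1) + real (Suc m) * UU G m (\<lambda>L y. F (Suc L) y)) / fact (Suc m)
       = VV G (Suc m) (F 1) / fact (Suc m) + UU G m (\<lambda>L y. F (Suc L) y) / fact m"
      unfolding f by (simp add: add_divide_distrib)
    thus ?thesis unfolding uu_def vv_def UU_rec .
  qed
  also have "\<dots> = (\<Sum>i\<le>Suc m. vv G (Suc m - i) (F (Suc i)))"
    unfolding Suc.IH sum.atMost_Suc_shift by simp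
  finally show ?case .
qed


lemma VV_pow_Suc:
  "VV G (Suc m) (\<lambda>y. y^(Suc k)) = real (Suc m) * UU G m (\<lambda>L y. G L * (ww G L + y)^k)"
proof -
  let ?P = "{p. p permutes {..<Suc m}}"
  have "VV G (Suc m) (\<lambda>y. y^(Suc k)) = (\<Sum>p\<in>?P. \<Sum>x<Suc m. G (card (orbit p x)) * XX G {..<Suc m} p ^ k)"
    unfolding VV_def by (intro sum.cong refl) (simp add: XX_def sum_distrib_right[symmetric] mult.commute)
  also have "\<dots> = (\<Sum>x<Suc m. \<Sum>p\<in>?P. G (card (orbit p x)) * XX G {..<Suc m} p ^ k)"
    by (rule sum.swap)
  also have "\<dots> = (\<Sum>x<Suc m. \<Sum>p\<in>?P. G (card (orbit p m)) * XX G {..<Suc m} p ^ k)"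
    by (intro sum.cong refl sym_perm[where \<Phi> = "\<lambda>L y. G L * y ^ k"]) auto
  also have "\<dots> = real (Suc m) * UU G m (\<lambda>L y. G L * (ww G L + y)^k)"
    unfolding UU_def by simp
  finally show ?thesis .
qed

definition mom where "mom G n k = vv G n (\<lambda>y. y^k)"

lemma VV_lin: "VV G n (\<lambda>y. c * (\<Sum>j\<le>k. a j * y^(k-j))) = c * (\<Sum>j\<le>k. a j * VV G n (\<lambda>y. y^(k-j)))"
  unfolding VV_def sum_distrib_left
  by (subst sum.swap) (simp add: sum_distrib_left mult.assoc)

lemma mom_Suc:
  "mom G (Suc m) (Suc k) = (\<Sum>i\<le>m. G (Suc i) *
      (\<Sum>j\<le>k. real (k choose j) * ww G (Suc i) ^ j * mom G (m - i) (k - j)))"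
proof -
  have "mom G (Suc m) (Suc k) = uu G m (\<lambda>L y. G L * (ww G L + y)^k)"
    unfolding mom_def vv_def uu_def VV_pow_Suc by simp
  also have "\<dots> = (\<Sum>i\<le>m. vv G (m - i) (\<lambda>y. G (Suc i) * (ww G (Suc i) + y)^k))"
    by (rule uu_sum)
  also have "\<dots> = (\<Sum>i\<le>m. G (Suc i) *
      (\<Sum>j\<le>k. real (k choose j) * ww G (Suc i) ^ j * mom G (m - i) (k - j)))"
  proof (intro sum.cong refl)
    fix i
    have "vv G (m - i) (\<lambda>y. G (Suc i) * (ww G (Suc i) + y)^k)
        = vv G (m - i) (\<lambda>y. G (Suc i) * (\<Sum>j\<le>k. (real (k choose j) * ww G (Suc i) ^ j) * y^(k-j)))"
      unfolding binomial_ring by (simp add: mult.assoc)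
    also have "\<dots> = G (Suc i) * (\<Sum>j\<le>k. real (k choose j) * ww G (Suc i) ^ j * mom G (m - i) (k - j))"
      unfolding vv_def VV_lin mom_def by (simp add: sum_divide_distrib[symmetric])
    finally show "vv G (m - i) (\<lambda>y. G (Suc i) * (ww G (Suc i) + y)^k) = 
      G (Suc i) * (\<Sum>j\<le>k. real (k choose j) * ww G (Suc i) ^ j * mom G (m - i) (k - j))" .
  qed
  finally show ?thesis .
qed

lemma mom_0: "mom G n 0 = 1"
  unfolding mom_def vv_def VV_def using card_permutations[of "{..<n}" n] by simp

lemma mom_zero_Suc: "mom G 0 (Suc k) = 0"
  unfolding mom_def vv_def VV_def XX_def by simp


fun Tm :: "(nat \<Rightarrow> real) \<Rightarrow> nat \<Rightarrow> real" where
  "Tm a 0 = 1"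
| "Tm a (Suc k) = (\<Sum>j\<le>k. real (k choose j) * a j * Tm a (k - j))"

lemma maj_aux:
  fixes \<alpha> l \<epsilon> :: real and K k :: nat
  assumes a0: "0 \<le> \<alpha>" and l0: "0 \<le> l" and Ka: "real K * \<alpha> \<le> 1"
    and l32: "l * (3/2)^K \<le> 1" and kK: "k < K"
    and eps: "\<epsilon> = \<alpha> + sqrt (real K * \<alpha>)"
  defines "F \<equiv> (%k. \<epsilon>^k + l * (1+\<epsilon>)^k + l^2 * (2+\<epsilon>)^k)"
  shows "\<alpha> * F k + (if k = 0 then 0 else \<alpha> * real k * F (k-1))
          + l * ((1+\<epsilon>)^k + l * (2+\<epsilon>)^k + l^2 * (3+\<epsilon>)^k) \<le> F (Suc k)"
proof -
  define s where "s = sqrt (real K * \<alpha>)"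
  have s0: "0 \<le> s" unfolding s_def using a0 by simp
  have ss: "s^2 = real K * \<alpha>" unfolding s_def using a0 by simp
  have e: "\<epsilon> = \<alpha> + s" using eps s_def by simp
  have e0: "0 \<le> \<epsilon>" using e a0 s0 by simp
  have ae: "\<alpha> \<le> \<epsilon>" using e s0 by simp
  have E0: "\<alpha> * real k \<le> s"
  proof -
    have "\<alpha> * real k \<le> \<alpha> * real K" using kK a0 by (intro mult_left_mono) auto
    hence h1: "\<alpha> * real k \<le> 1" using Ka by (simp add: mult.commute)
    have "(\<alpha> * real k)^2 \<le> \<alpha> * real k" 
      using h1 a0 by (simp add: power2_eq_square mult_left_le)
    also have "\<dots> \<le> real K * \<alpha>" using kK a0 by (simp add: mult.commute mult_left_mono)
    finally have "(\<alpha> * real k)^2 \<le> real K * \<alpha>" .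
    thus ?thesis unfolding s_def by (rule real_le_rsqrt)
  qed
  have E1: "\<alpha> * \<epsilon> + \<alpha> * real k \<le> \<epsilon>^2"
  proof -
    have "\<alpha> * real k \<le> real K * \<alpha>" using kK a0 by (simp add: mult.commute mult_left_mono)
    moreover have "0 \<le> \<alpha> * s" using a0 s0 by simp
    ultimately show ?thesis unfolding e using ss by (simp add: power2_eq_square algebra_simps)
  qed
  have aeps2: "\<alpha> * \<epsilon> \<le> \<epsilon> * \<epsilon>" using ae e0 by (simp add: mult_right_mono)
  have E2: "\<alpha> * (1+\<epsilon>) + \<alpha> * real k \<le> \<epsilon> * (1+\<epsilon>)"
    using E0 aeps2 e by (simp add: algebra_simps)
  have E3: "\<alpha> * (2+\<epsilon>) + \<alpha> * real k \<le> \<epsilon> * (2+\<epsilon>)"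
    using E0 aeps2 e ae by (simp add: algebra_simps)
  have E4: "l * (3+\<epsilon>)^k \<le> (2+\<epsilon>)^k"
  proof -
    have "(3+\<epsilon>)^k \<le> ((3/2) * (2+\<epsilon>))^k" using e0 by (intro power_mono) auto
    also have "\<dots> = (3/2)^k * (2+\<epsilon>)^k" by (simp only: power_mult_distrib)
    finally have "l * (3+\<epsilon>)^k \<le> l * (3/2)^k * (2+\<epsilon>)^k" using l0
      by (simp add: mult_left_mono mult.assoc)
    also have "\<dots> \<le> 1 * (2+\<epsilon>)^k"
    proof (intro mult_right_mono)
      have "(3/2::real)^k \<le> (3/2)^K" using kK by (intro power_increasing) auto
      hence "l * (3/2)^k \<le> l * (3/2)^K" using l0 by (rule mult_left_mono)
      thus "l * (3/2)^k \<le> 1" using l32 by simp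
    qed (use e0 in auto)
    finally show ?thesis by simp
  qed
  show ?thesis
  proof (cases k)
    case 0
    have l1: "l \<le> 1"
    proof -
      have "l * 1 \<le> l * (3/2)^K" using l0 by (intro mult_left_mono) auto
      thus ?thesis using l32 by simp
    qed
    have "l * l^2 \<le> 1 * l^2" using l1 by (intro mult_right_mono) auto
    moreover have "\<alpha> * (1 + l + l^2) \<le> \<epsilon> * (1 + l + l^2)" using ae l0 by (intro mult_right_mono) auto
    ultimately show ?thesis using 0 unfolding F_def by (simp add: algebra_simps power2_eq_square power3_eq_cube)
  next
    case (Suc m)
    have G1: "\<alpha> * \<epsilon>^k + \<alpha> * real k * \<epsilon>^m \<le> \<epsilon>^(Suc k)"
    proof -
      have "\<epsilon>^m * (\<alpha> * \<epsilon> + \<alpha> * real k) \<le> \<epsilon>^m * \<epsilon>^2" using E1 e0 by (intro mult_left_mono) auto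
      thus ?thesis using Suc by (simp add: algebra_simps power2_eq_square)
    qed
    have G2: "\<alpha> * (1+\<epsilon>)^k + \<alpha> * real k * (1+\<epsilon>)^m + (1+\<epsilon>)^k \<le> (1+\<epsilon>)^(Suc k)"
    proof -
      have "(1+\<epsilon>)^m * (\<alpha> * (1+\<epsilon>) + \<alpha> * real k + (1+\<epsilon>)) \<le> (1+\<epsilon>)^m * (1+\<epsilon>)^2" 
        using E2 e0 by (intro mult_left_mono) (auto simp: power2_eq_square algebra_simps)
      thus ?thesis using Suc by (simp add: algebra_simps power2_eq_square)
    qed
    have G3: "\<alpha> * (2+\<epsilon>)^k + \<alpha> * real k * (2+\<epsilon>)^m + (2+\<epsilon>)^k + l * (3+\<epsilon>)^k \<le> (2+\<epsilon>)^(Suc k)"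
    proof -
      have "(2+\<epsilon>)^m * (\<alpha> * (2+\<epsilon>) + \<alpha> * real k + 2 * (2+\<epsilon>)) \<le> (2+\<epsilon>)^m * (2+\<epsilon>)^2" 
        using E3 e0 by (intro mult_left_mono) (auto simp: power2_eq_square algebra_simps)
      thus ?thesis using Suc E4 by (simp add: algebra_simps power2_eq_square)
    qed
    have "\<alpha> * F k + \<alpha> * real k * F m + l * ((1+\<epsilon>)^k + l * (2+\<epsilon>)^k + l^2 * (3+\<epsilon>)^k)
      = (\<alpha> * \<epsilon>^k + \<alpha> * real k * \<epsilon>^m) + l * (\<alpha> * (1+\<epsilon>)^k + \<alpha> * real k * (1+\<epsilon>)^m + (1+\<epsilon>)^k)
        + l^2 * (\<alpha> * (2+\<epsilon>)^k + \<alpha> * real k * (2+\<epsilon>)^m + (2+\<epsilon>)^k + l * (3+\<epsilon>)^k)"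
      unfolding F_def by (simp add: algebra_simps power2_eq_square)
    also have "\<dots> \<le> \<epsilon>^(Suc k) + l * (1+\<epsilon>)^(Suc k) + l^2 * (2+\<epsilon>)^(Suc k)"
      using G1 G2 G3 l0 by (intro add_mono mult_left_mono) auto
    finally show ?thesis using Suc unfolding F_def by simp
  qed
qed

lemma Tm_nonneg: "(\<And>j. 0 \<le> A j) \<Longrightarrow> 0 \<le> Tm A k"
proof (induction k rule: less_induct)
  case (less k)
  show ?case
  proof (cases k)
    case (Suc k')
    have "\<And>j. j \<le> k' \<Longrightarrow> 0 \<le> real (k' choose j) * A j * Tm A (k' - j)"
      using less Suc by (intro mult_nonneg_nonneg) auto
    thus ?thesis using Suc by (auto intro: sum_nonneg)
  qed simp
qed

lemma binom_sum_shift: "(\<Sum>j\<le>n. real (n choose j) * \<rho>^(n-j)) = (1+\<rho>)^n"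
  using binomial_ring[of "1::real" \<rho> n] by (simp add: add.commute)

lemma sum_small_idx:
  fixes h :: "nat \<Rightarrow> real"
  shows "(\<Sum>j\<le>k. real (k choose j) * (if j \<le> 1 then \<alpha> else 0) * h (k-j))
       = \<alpha> * h k + (if k = 0 then 0 else \<alpha> * real k * h (k-1))"
proof (cases k)
  case 0 thus ?thesis by simp
next
  case (Suc m)
  have "(\<Sum>j\<le>k. real (k choose j) * (if j \<le> 1 then \<alpha> else 0) * h (k-j))
      = (\<Sum>j\<in>{0,1}. real (k choose j) * (if j \<le> 1 then \<alpha> else 0) * h (k-j))"
    using Suc by (intro sum.mono_neutral_right) auto
  thus ?thesis using Suc by (simp add: algebra_simps)
qed

lemma majorant:
  fixes A :: "nat \<Rightarrow> real" and Q \<alpha> l \<epsilon> :: real and K :: nat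
  assumes Q0: "0 < Q" and a0: "0 \<le> \<alpha>" and l0: "0 \<le> l" and Ka: "real K * \<alpha> \<le> 1"
    and l32: "l * (3/2)^K \<le> 1"
    and eps: "\<epsilon> = \<alpha> + sqrt (real K * \<alpha>)"
    and A0: "\<And>j. 0 \<le> A j"
    and Ab: "\<And>j. A j \<le> Q^(Suc j) * ((if j \<le> 1 then \<alpha> else 0) + l)"
  shows "k \<le> K \<Longrightarrow> Tm A k \<le> Q^k * (\<epsilon>^k + l * (1+\<epsilon>)^k + l^2 * (2+\<epsilon>)^k)"
proof (induction k rule: less_induct)
  case (less k)
  define F where "F = (%k. \<epsilon>^k + l * (1+\<epsilon>)^k + l^2 * (2+\<epsilon>)^k)"
  have e0: "0 \<le> \<epsilon>" using eps a0 by simp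
  have F0: "\<And>k. 0 \<le> F k" unfolding F_def using e0 l0 by simp
  show ?case
  proof (cases k)
    case 0 thus ?thesis using l0 by simp
  next
    case (Suc k')
    define c where "c = (%j::nat. (if j \<le> 1 then \<alpha> else 0) + l)"
    have c0: "\<And>j. 0 \<le> c j" unfolding c_def using a0 l0 by simp
    have "Tm A k = (\<Sum>j\<le>k'. real (k' choose j) * A j * Tm A (k' - j))" using Suc by simp
    also have "\<dots> \<le> (\<Sum>j\<le>k'. real (k' choose j) * (Q^(Suc j) * c j) * (Q^(k'-j) * F (k'-j)))"
    proof (intro sum_mono mult_mono mult_left_mono)
      fix j assume j: "j \<in> {..k'}"
      show "A j \<le> Q ^ Suc j * c j" using Ab c_def by simp
      show "Tm A (k' - j) \<le> Q ^ (k' - j) * F (k' - j)" using less.IH[of "k'-j"] Suc less.prems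
        unfolding F_def by auto
      show "0 \<le> Tm A (k' - j)" using A0 by (rule Tm_nonneg)
      show "0 \<le> real (k' choose j) * (Q ^ Suc j * c j)" using Q0 c0 by simp
    qed (use A0 in auto)
    also have "\<dots> = Q^k * (\<Sum>j\<le>k'. real (k' choose j) * c j * F (k'-j))"
      unfolding sum_distrib_left
    proof (intro sum.cong refl)
      fix j assume "j \<in> {..k'}"
      hence "Q^(Suc j) * Q^(k'-j) = Q^k" using Suc by (simp flip: power_add)
      thus "real (k' choose j) * (Q ^ Suc j * c j) * (Q ^ (k' - j) * F (k' - j)) =
         Q ^ k * (real (k' choose j) * c j * F (k' - j))" by (simp add: algebra_simps)
    qed
    also have "(\<Sum>j\<le>k'. real (k' choose j) * c j * F (k'-j))
        = (\<Sum>j\<le>k'. real (k' choose j) * (if j \<le> 1 then \<alpha> else 0) * F (k'-j))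
          + l * (\<Sum>j\<le>k'. real (k' choose j) * F (k'-j))"
      unfolding c_def sum_distrib_left sum.distrib[symmetric] by (intro sum.cong) (auto simp: algebra_simps)
    also have "(\<Sum>j\<le>k'. real (k' choose j) * F (k'-j))
        = (1+\<epsilon>)^k' + l * (2+\<epsilon>)^k' + l^2 * (3+\<epsilon>)^k'"
    proof -
      have "(\<Sum>j\<le>k'. real (k' choose j) * F (k'-j))
         = (\<Sum>j\<le>k'. real (k' choose j) * \<epsilon>^(k'-j)) + l * (\<Sum>j\<le>k'. real (k' choose j) * (1+\<epsilon>)^(k'-j))
           + l^2 * (\<Sum>j\<le>k'. real (k' choose j) * (2+\<epsilon>)^(k'-j))"
        unfolding F_def sum_distrib_left sum.distrib[symmetric] by (intro sum.cong) (auto simp: algebra_simps)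
      also have "\<dots> = (1+\<epsilon>)^k' + l * (2+\<epsilon>)^k' + l^2 * (3+\<epsilon>)^k'"
        unfolding binom_sum_shift by (simp add: add.assoc[symmetric])
      finally show ?thesis by (simp add: numeral_eq_Suc)
    qed
    also have "(\<Sum>j\<le>k'. real (k' choose j) * (if j \<le> 1 then \<alpha> else 0) * F (k'-j))
       = \<alpha> * F k' + (if k' = 0 then 0 else \<alpha> * real k' * F (k'-1))" by (rule sum_small_idx)
    also have "\<alpha> * F k' + (if k' = 0 then 0 else \<alpha> * real k' * F (k'-1))
          + l * ((1+\<epsilon>)^k' + l * (2+\<epsilon>)^k' + l^2 * (3+\<epsilon>)^k') \<le> F (Suc k')"
      unfolding F_def using maj_aux[OF a0 l0 Ka l32 _ eps, of k'] Suc less.prems by simp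
    finally show ?thesis using Suc Q0 unfolding F_def by (simp add: mult_left_mono)
  qed
qed

lemma mom_le_Tm:
  assumes G0: "\<And>L. 0 \<le> G L"
    and Ab: "\<And>m j. (\<Sum>i\<le>m. G (Suc i) * ww G (Suc i) ^ j) \<le> A j"
  shows "mom G n k \<le> Tm A k"
proof (induction k arbitrary: n rule: less_induct)
  case (less k)
  have w0: "\<And>L. 0 \<le> ww G L" unfolding ww_def using G0 by simp
  have A0: "\<And>j. 0 \<le> A j"
  proof -
    fix j
    have "0 \<le> (\<Sum>i\<le>0. G (Suc i) * ww G (Suc i) ^ j)" using G0 w0 by simp
    thus "0 \<le> A j" using Ab[where m=0 and j=j] by (rule order_trans)
  qed
  show ?case
  proof (cases k)
    case 0 thus ?thesis by (simp add: mom_0)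
  next
    case (Suc k')
    show ?thesis
    proof (cases n)
      case 0
      have "0 \<le> Tm A k" by (rule Tm_nonneg) (rule A0)
      thus ?thesis using 0 Suc by (simp add: mom_zero_Suc)
    next
      case (Suc m)
      have "mom G n k = (\<Sum>i\<le>m. G (Suc i) *
          (\<Sum>j\<le>k'. real (k' choose j) * ww G (Suc i) ^ j * mom G (m - i) (k' - j)))"
        using Suc \<open>k = Suc k'\<close> mom_Suc by simp
      also have "\<dots> \<le> (\<Sum>i\<le>m. G (Suc i) *
          (\<Sum>j\<le>k'. real (k' choose j) * ww G (Suc i) ^ j * Tm A (k' - j)))"
        using less.IH \<open>k = Suc k'\<close> G0 w0
        by (intro sum_mono mult_left_mono) auto
      also have "\<dots> = (\<Sum>j\<le>k'. real (k' choose j) * Tm A (k' - j) * (\<Sum>i\<le>m. G (Suc i) * ww G (Suc i) ^ j))"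
        unfolding sum_distrib_left sum_distrib_right
        by (subst sum.swap) (simp add: algebra_simps)
      also have "\<dots> \<le> (\<Sum>j\<le>k'. real (k' choose j) * Tm A (k' - j) * A j)"
        using Tm_nonneg[of A, OF A0] Ab by (intro sum_mono mult_left_mono) auto
      also have "\<dots> = Tm A k" using \<open>k = Suc k'\<close> by (simp add: algebra_simps)
      finally show ?thesis .
    qed
  qed
qed


lemma period_dvd:
  assumes p: "f permutes S" and fin: "finite S"
  shows "(f ^^ m) x = x \<longleftrightarrow> card (orbit f x) dvd m"
proof -
  have xo: "x \<in> orbit f x" by (rule perm_self_orbit[OF p fin])
  define P where "P = funpow_dist1 f x x"
  have cP: "card (orbit f x) = P"
    unfolding P_def orbit_conv_funpow_dist1[OF xo]
    using inj_on_funpow_dist1[OF xo] by (simp add: card_image)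
  have fP: "(f ^^ P) x = x" unfolding P_def by (rule funpow_dist1_prop[OF xo])
  have P0: "0 < P" unfolding P_def by simp
  have "(f ^^ m) x = (f ^^ (m mod P)) x" by (simp add: funpow_mod_eq[OF fP])
  moreover have "(f ^^ (m mod P)) x = x \<longleftrightarrow> m mod P = 0"
  proof
    assume h: "(f ^^ (m mod P)) x = x"
    show "m mod P = 0"
    proof (rule ccontr)
      assume "m mod P \<noteq> 0"
      hence "(f ^^ (m mod P)) x \<noteq> x"
        using P0 unfolding P_def by (intro funpow_dist1_least) (auto simp: P_def[symmetric])
      thus False using h by simp
    qed
  qed simp
  ultimately show ?thesis using cP by (simp add: dvd_eq_mod_eq_0)
qed

lemma dvd_coprime_aux:
  fixes g L' q' k :: nat
  assumes "g > 0" "coprime L' q'"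
  shows "g * L' dvd g * (q' * k) \<longleftrightarrow> L' dvd k"
  using assms by (simp add: coprime_dvd_mult_right_iff coprime_dvd_mult_left_iff)

lemma card_orbit_pow:
  assumes p: "f permutes S" and fin: "finite S"
  shows "card (orbit (f ^^ q) x) = card (orbit f x) div gcd (card (orbit f x)) q"
proof -
  let ?L = "card (orbit f x)"
  let ?g = "gcd ?L q"
  let ?L' = "?L div ?g"
  have L0: "?L \<noteq> 0"
    using finite_orbit[OF perm_self_orbit[OF p fin]] orbit_nonempty[of f x] by (simp add: card_eq_0_iff)
  have g0: "?g > 0" using L0 by simp
  have pq: "(f ^^ q) permutes S" by (rule permutes_funpow[OF p])
  have cop: "coprime ?L' (q div ?g)" using L0 by (intro div_gcd_coprime) auto
  have key: "card (orbit (f ^^ q) x) dvd k \<longleftrightarrow> ?L' dvd k" for k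
  proof -
    have "card (orbit (f ^^ q) x) dvd k \<longleftrightarrow> ((f ^^ q) ^^ k) x = x"
      by (rule period_dvd[OF pq fin, symmetric])
    also have "\<dots> \<longleftrightarrow> (f ^^ (q * k)) x = x" by (simp add: funpow_mult)
    also have "\<dots> \<longleftrightarrow> ?L dvd q * k" by (rule period_dvd[OF p fin])
    also have "\<dots> \<longleftrightarrow> ?g * ?L' dvd ?g * ((q div ?g) * k)"
    proof -
      have e1: "?g * ?L' = ?L" by simp
      have e2: "?g * (q div ?g) = q" by simp
      show ?thesis by (metis e1 e2 mult.assoc)
    qed
    also have "\<dots> \<longleftrightarrow> ?L' dvd k" by (rule dvd_coprime_aux[OF g0 cop])
    finally show ?thesis .
  qed
  show ?thesis using key[of "card (orbit (f ^^ q) x)"] key[of ?L'] by (simp add: dvd_antisym)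
qed


definition hh :: "nat \<Rightarrow> nat \<Rightarrow> real" where
  "hh r l = (if 1 \<le> l \<and> l \<le> r then 1 / real l else 0)"

lemma cycle_count_real:
  assumes s: "\<sigma> permutes {..<n}" and d: "d \<ge> 1"
  shows "real (cycle_count n \<sigma> d) = (\<Sum>x<n. if card (orbit \<sigma> x) = d then 1 / real d else 0)"
proof -
  let ?C = "{orbit \<sigma> x | x. x < n \<and> card (orbit \<sigma> x) = d}"
  let ?U = "{x. x < n \<and> card (orbit \<sigma> x) = d}"
  have fin: "finite {..<n}" by simp
  have UC: "\<Union>?C = ?U"
  proof (intro set_eqI iffI)
    fix y assume "y \<in> \<Union>?C"
    then obtain x where x: "x < n" "card (orbit \<sigma> x) = d" "y \<in> orbit \<sigma> x" by auto
    have "y < n" using permutes_orbit_subset[OF s, of x] x by auto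
    moreover have "orbit \<sigma> y = orbit \<sigma> x" using perm_orbit_eq[OF s fin x(3)] .
    ultimately show "y \<in> ?U" using x by auto
  next
    fix y assume "y \<in> ?U"
    thus "y \<in> \<Union>?C" using perm_self_orbit[OF s fin, of y] by auto
  qed
  have finC: "finite ?C"
  proof -
    have "?C = (\<lambda>x. orbit \<sigma> x) ` ?U" by auto
    thus ?thesis by simp
  qed
  have "d * card ?C = card (\<Union>?C)"
  proof (rule card_partition[OF finC])
    show "finite (\<Union>?C)" unfolding UC by simp
  next
    fix c assume "c \<in> ?C" thus "card c = d" by auto
  next
      fix c1 c2 assume c1: "c1 \<in> ?C" and c2: "c2 \<in> ?C" and ne: "c1 \<noteq> c2"
      obtain x1 where x1: "c1 = orbit \<sigma> x1" using c1 by auto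
      obtain x2 where x2: "c2 = orbit \<sigma> x2" using c2 by auto
      show "c1 \<inter> c2 = {}"
      proof (rule ccontr)
        assume "c1 \<inter> c2 \<noteq> {}"
        then obtain y where "y \<in> orbit \<sigma> x1" "y \<in> orbit \<sigma> x2" using x1 x2 by auto
        hence "orbit \<sigma> x1 = orbit \<sigma> x2" using perm_orbit_eq[OF s fin] by metis
        thus False using ne x1 x2 by simp
      qed
  qed
  hence "real (card ?C) = real (card ?U) / real d" using d unfolding UC by (simp add: field_simps flip: of_nat_mult)
  also have "\<dots> = (\<Sum>x\<in>?U. 1 / real d)" by simp
  also have "\<dots> = (\<Sum>x<n. if card (orbit \<sigma> x) = d then 1 / real d else 0)"
    by (subst sum.inter_filter[symmetric]) (auto intro: sum.cong)
  finally show ?thesis unfolding cycle_count_def .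
qed

lemma cc_sum:
  assumes s: "\<sigma> permutes {..<n}"
  shows "real (\<Sum>d=1..r. cycle_count n \<sigma> d) = (\<Sum>x<n. hh r (card (orbit \<sigma> x)))"
proof -
  have "real (\<Sum>d=1..r. cycle_count n \<sigma> d) = (\<Sum>d=1..r. \<Sum>x<n. if card (orbit \<sigma> x) = d then 1 / real d else 0)"
    unfolding of_nat_sum using cycle_count_real[OF s] by (intro sum.cong) auto
  also have "\<dots> = (\<Sum>x<n. \<Sum>d=1..r. if card (orbit \<sigma> x) = d then 1 / real d else 0)"
    by (rule sum.swap)
  also have "\<dots> = (\<Sum>x<n. hh r (card (orbit \<sigma> x)))"
    unfolding hh_def by (intro sum.cong refl) (auto simp: sum.delta')
  finally show ?thesis .
qed


definition GG :: "nat \<Rightarrow> nat \<Rightarrow> nat \<Rightarrow> real" where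
  "GG r q L = hh r (L div gcd L q)"

definition sig :: "nat \<Rightarrow> nat \<Rightarrow> real" where
  "sig j q = (\<Sum>d\<in>{d. d dvd q}. real d ^ j)"

lemma GG_nonneg: "0 \<le> GG r q L"
  unfolding GG_def hh_def by simp

lemma XX_GG:
  assumes p: "\<pi> permutes {..<n}"
  shows "real (\<Sum>d=1..r. cycle_count n (\<pi> ^^ q) d) = XX (GG r q) {..<n} \<pi>"
  unfolding cc_sum[OF permutes_funpow[OF p]] XX_def GG_def
  using card_orbit_pow[OF p] by simp

lemma GG_sum_bound:
  assumes q0: "q > 0"
  shows "(\<Sum>i\<le>m. GG r q (Suc i) * ww (GG r q) (Suc i) ^ j) \<le> harmonic_num r * sig j q"
proof -
  let ?f = "\<lambda>L. GG r q L * ww (GG r q) L ^ j"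
  let ?A = "Suc ` {..m}"
  let ?S = "{L\<in>?A. 1 \<le> L div gcd L q \<and> L div gcd L q \<le> r}"
  let ?\<phi> = "\<lambda>L. (gcd L q, L div gcd L q)"
  let ?F = "\<lambda>(g::nat, l::nat). real g ^ j * (1 / real l)"
  let ?D = "{d. d dvd q}"
  have finD: "finite ?D" using q0 by simp
  have "(\<Sum>i\<le>m. ?f (Suc i)) = sum ?f ?A" by (simp add: sum.reindex)
  also have "\<dots> = sum ?f ?S"
    by (rule sum.mono_neutral_right) (auto simp: GG_def hh_def)
  also have "\<dots> = sum (?F \<circ> ?\<phi>) ?S"
  proof (intro sum.cong refl)
    fix L assume L: "L \<in> ?S"
    hence L1: "L \<ge> 1" by auto
    let ?g = "gcd L q" and ?l = "L div gcd L q"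
    have Lgl: "real L = real ?g * real ?l" by (simp flip: of_nat_mult)
    have l0: "?l \<ge> 1" using L by auto
    have "ww (GG r q) L = real ?g" unfolding ww_def GG_def hh_def using L l0 Lgl by simp
    thus "?f L = (?F \<circ> ?\<phi>) L" using L unfolding GG_def hh_def by simp
  qed
  also have "\<dots> = sum ?F (?\<phi> ` ?S)"
  proof (rule sum.reindex[symmetric])
    show "inj_on ?\<phi> ?S"
    proof (rule inj_onI)
      fix x y assume "?\<phi> x = ?\<phi> y"
      note h = this
      have a: "gcd x q = gcd y q" using h by (metis fst_conv)
      have b: "x div gcd x q = y div gcd y q" using h by (metis snd_conv)
      have "x = gcd x q * (x div gcd x q)" by simp
      also have "\<dots> = gcd y q * (y div gcd y q)" by (metis a b)
      also have "\<dots> = y" by simp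
      finally show "x = y" .
    qed
  qed
  also have "\<dots> \<le> sum ?F (?D \<times> {1..r})"
  proof (rule sum_mono2)
    show "finite (?D \<times> {1..r})" using finD by simp
    show "?\<phi> ` ?S \<subseteq> ?D \<times> {1..r}" by auto
    show "\<And>b. b \<in> ?D \<times> {1..r} - ?\<phi> ` ?S \<Longrightarrow> 0 \<le> ?F b" by auto
  qed
  also have "\<dots> = sig j q * harmonic_num r"
    unfolding sum.cartesian_product[symmetric] sig_def harmonic_num_def sum_product
    by simp
  finally show ?thesis by (simp add: mult.commute)
qed

lemma main_moment_bound:
  assumes q0: "q > 0"
  shows "(1 / fact n) * (\<Sum>\<pi>\<in>{\<pi>. \<pi> permutes {..<n}}.
            (real (\<Sum>d=1..r. cycle_count n (\<pi> ^^ q) d)) ^ \<delta>)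
       \<le> Tm (\<lambda>j. harmonic_num r * sig j q) \<delta>"
proof -
  have "(1 / fact n) * (\<Sum>\<pi>\<in>{\<pi>. \<pi> permutes {..<n}}.
            (real (\<Sum>d=1..r. cycle_count n (\<pi> ^^ q) d)) ^ \<delta>) = mom (GG r q) n \<delta>"
    unfolding mom_def vv_def VV_def using XX_GG by simp
  also have "\<dots> \<le> Tm (\<lambda>j. harmonic_num r * sig j q) \<delta>"
    by (rule mom_le_Tm[OF GG_nonneg GG_sum_bound[OF q0]])
  finally show ?thesis .
qed


lemma dcount_mult_coprime:
  fixes a b :: nat
  assumes cop: "coprime a b" and a0: "a > 0" and b0: "b > 0"
  shows "card {d. d dvd a * b} = card {d. d dvd a} * card {d. d dvd b}"
proof -
  let ?m = "\<lambda>(x::nat, y::nat). x * y"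
  have img: "{d. d dvd a * b} = ?m ` ({x. x dvd a} \<times> {y. y dvd b})"
  proof (intro set_eqI iffI)
    fix d assume "d \<in> {d. d dvd a * b}"
    then obtain x y where "d = x * y" "x dvd a" "y dvd b" using division_decomp[of d a b] by auto
    thus "d \<in> ?m ` ({x. x dvd a} \<times> {y. y dvd b})" by force
  qed (auto intro: mult_dvd_mono)
  have inj: "inj_on ?m ({x. x dvd a} \<times> {y. y dvd b})"
  proof (rule inj_onI, clarify)
    fix x1 y1 x2 y2 assume h: "x1 dvd a" "y1 dvd b" "x2 dvd a" "y2 dvd b" "x1 * y1 = x2 * y2"
    have c12: "coprime x1 y2" using h cop by (intro coprime_divisors[of x1 a y2 b]) auto
    have c21: "coprime x2 y1" using h cop by (intro coprime_divisors[of x2 a y1 b]) auto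
    have "x1 dvd x2 * y2" using h(5) by (metis dvd_triv_left)
    hence d1: "x1 dvd x2" using c12 by (simp add: coprime_dvd_mult_left_iff)
    have "x2 dvd x1 * y1" using h(5) by (metis dvd_triv_left)
    hence d2: "x2 dvd x1" using c21 by (simp add: coprime_dvd_mult_left_iff)
    have x: "x1 = x2" using d1 d2 by (rule dvd_antisym)
    have "x1 > 0" using h(1) a0 by (auto intro: Nat.gr0I)
    hence "y1 = y2" using h(5) x by simp
    thus "x1 = x2 \<and> y1 = y2" using x by simp
  qed
  have fa: "finite {x. x dvd a}" using a0 by simp
  have fb: "finite {x. x dvd b}" using b0 by simp
  show ?thesis unfolding img card_image[OF inj] card_cartesian_product ..
qed

lemma dcount_prime_power:
  fixes p :: nat
  assumes p: "prime p"
  shows "card {d. d dvd p ^ e} = Suc e"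
proof -
  have "{d. d dvd p ^ e} = (\<lambda>i. p ^ i) ` {..e}"
    using divides_primepow_nat[OF p] by auto
  moreover have "inj_on (\<lambda>i. p ^ i) {..e}"
    using p by (intro inj_onI) (auto simp: prime_gt_Suc_0_nat power_inject_exp)
  ultimately show ?thesis by (simp add: card_image)
qed

lemma cube_le_8pow: "(Suc e)^3 \<le> 8 * 2^e"
proof (induction e rule: less_induct)
  case (less e)
  show ?case
  proof (cases "e \<le> 3")
    case True
    hence "e = 0 \<or> e = 1 \<or> e = 2 \<or> e = 3" by auto
    thus ?thesis by (auto simp: power3_eq_cube)
  next
    case False
    then obtain e' where e: "e = Suc e'" and e3: "e' \<ge> 3" by (cases e) auto
    have IH: "(Suc e')^3 \<le> 8 * 2^e'" using less e by simp
    have "(Suc (Suc e'))^3 \<le> 2 * (Suc e')^3"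
    proof -
      have "(Suc (Suc e'))^3 = e'^3 + 6*e'^2 + 12*e' + 8" by (simp add: power3_eq_cube power2_eq_square algebra_simps)
      moreover have "2 * (Suc e')^3 = 2*e'^3 + 6*e'^2 + 6*e' + 2" by (simp add: power3_eq_cube power2_eq_square algebra_simps)
      moreover have "6*e' + 6 \<le> e'^3"
      proof -
        have h9: "9 \<le> e' * e'" using mult_le_mono[OF e3 e3] by simp
        have h: "9 * e' \<le> e' * e' * e'" using mult_le_mono[OF h9 order_refl[of e']] by simp
        show ?thesis using h e3 unfolding power3_eq_cube by linarith
      qed
      ultimately show ?thesis by simp
    qed
    thus ?thesis using IH e by simp
  qed
qed

lemma cube_le_8pow': "(Suc e)^3 \<le> 8^e"
proof (induction e)
  case 0 thus ?case by simp
next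
  case (Suc e)
  have "(Suc (Suc e))^3 \<le> 8 * (Suc e)^3" by (simp add: power3_eq_cube algebra_simps)
  thus ?case using Suc by simp
qed

definition smallp :: "nat \<Rightarrow> nat set" where
  "smallp n = {p. p < 8 \<and> prime p \<and> p dvd n}"

lemma dcount_bound_aux:
  "n > 0 \<Longrightarrow> card {d. d dvd n} ^ 3 \<le> 8 ^ card (smallp n) * n"
proof (induction n rule: less_induct)
  case (less n)
  show ?case
  proof (cases "n = 1")
    case True
    have "{d. d dvd (1::nat)} = {1}" by auto
    thus ?thesis using True by (simp add: smallp_def)
  next
    case False
    then obtain p where p: "prime p" "p dvd n" using prime_factor_nat by blast
    obtain m where nm: "n = p ^ multiplicity p n * m" and pm: "\<not> p dvd m"
    proof -
      have "n \<noteq> 0" using less.prems by simp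
      moreover have "\<not> is_unit p" using prime_gt_1_nat[OF p(1)] by simp
      ultimately show ?thesis using that multiplicity_decompose' by metis
    qed
    define e where "e = multiplicity p n"
    have nm': "n = p ^ e * m" using nm e_def by simp
    have m0: "m > 0" using nm' less.prems by (cases m) auto
    have e1: "e \<ge> 1" using p pm nm' by (cases e) auto
    have p1: "p > 1" using prime_gt_1_nat[OF p(1)] by simp
    have "p ^ e > 1" using p1 e1 by (intro one_less_power) auto
    hence mn: "m < n" using nm' m0 by simp
    have IH: "card {d. d dvd m} ^ 3 \<le> 8 ^ card (smallp m) * m" using less.IH[OF mn m0] .
    have "coprime p m" by (rule prime_imp_coprime[OF p(1) pm])
    hence cop: "coprime (p ^ e) m" by simp
    have dc: "card {d. d dvd n} = Suc e * card {d. d dvd m}"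
    proof -
      have "card {d. d dvd p ^ e * m} = card {d. d dvd p ^ e} * card {d. d dvd m}"
        by (rule dcount_mult_coprime[OF cop]) (use p1 m0 in auto)
      thus ?thesis unfolding nm' dcount_prime_power[OF p(1)] .
    qed
    have finsm: "finite (smallp m)" unfolding smallp_def by simp
    have sm_sub: "smallp m \<subseteq> smallp n" unfolding smallp_def nm' by auto
    have psm: "p \<notin> smallp m" using pm unfolding smallp_def by simp
    show ?thesis
    proof (cases "p < 8")
      case True
      have sn: "smallp n = insert p (smallp m)"
      proof (intro set_eqI iffI)
        fix x assume x: "x \<in> smallp n"
        hence "prime x" "x dvd p ^ e * m" unfolding smallp_def nm' by auto
        hence "x dvd p ^ e \<or> x dvd m" using prime_dvd_mult_iff by blast
        hence "x = p \<or> x dvd m" using \<open>prime x\<close> p(1) by (metis prime_dvd_power primes_dvd_imp_eq)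
        thus "x \<in> insert p (smallp m)" using x unfolding smallp_def by auto
      next
        fix x assume "x \<in> insert p (smallp m)"
        thus "x \<in> smallp n" using True p sm_sub by (auto simp: smallp_def)
      qed
      have cs: "card (smallp n) = Suc (card (smallp m))" unfolding sn using finsm psm by simp
      have "card {d. d dvd n} ^ 3 = (Suc e)^3 * card {d. d dvd m} ^ 3" unfolding dc by (simp only: power_mult_distrib)
      also have "\<dots> \<le> (8 * 2^e) * (8 ^ card (smallp m) * m)" by (intro mult_mono cube_le_8pow IH) auto
      also have "\<dots> \<le> (8 * p^e) * (8 ^ card (smallp m) * m)"
        using p1 by (intro mult_mono power_mono) auto
      also have "\<dots> = 8 ^ card (smallp n) * n" unfolding cs by (subst nm') simp
      finally show ?thesis .
    next
      case False
      have sn: "smallp n = smallp m"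
      proof (intro set_eqI iffI)
        fix x assume x: "x \<in> smallp n"
        hence "prime x" "x dvd p ^ e * m" unfolding smallp_def nm' by auto
        hence "x dvd p ^ e \<or> x dvd m" using prime_dvd_mult_iff by blast
        hence "x = p \<or> x dvd m" using \<open>prime x\<close> p(1) by (metis prime_dvd_power primes_dvd_imp_eq)
        thus "x \<in> smallp m" using x False unfolding smallp_def by auto
      qed (use sm_sub in auto)
      have "card {d. d dvd n} ^ 3 = (Suc e)^3 * card {d. d dvd m} ^ 3" unfolding dc by (simp only: power_mult_distrib)
      also have "\<dots> \<le> (8^e) * (8 ^ card (smallp m) * m)" by (intro mult_mono cube_le_8pow' IH) auto
      also have "\<dots> \<le> (p^e) * (8 ^ card (smallp m) * m)"
        using False by (intro mult_mono power_mono) auto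
      also have "\<dots> = 8 ^ card (smallp n) * n" unfolding sn by (subst nm') simp
      finally show ?thesis .
    qed
  qed
qed

lemma dcount_bound: "n > 0 \<Longrightarrow> card {d. d dvd n} ^ 3 \<le> 2^24 * n"
proof -
  assume n: "n > 0"
  have "card (smallp n) \<le> card {..<8::nat}" unfolding smallp_def by (intro card_mono) auto
  hence a: "(8::nat) ^ card (smallp n) \<le> 8^8" by (intro power_increasing) auto
  have "card {d. d dvd n} ^ 3 \<le> 8 ^ card (smallp n) * n" by (rule dcount_bound_aux[OF n])
  also have "\<dots> \<le> 8^8 * n" using a by (rule mult_right_mono) simp
  finally show ?thesis by simp
qed


lemma sig_nonneg: "0 \<le> sig j q"
  unfolding sig_def by (intro sum_nonneg) auto

lemma sig0_eq: "q > 0 \<Longrightarrow> sig 0 q = real (card {d. d dvd q})"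
  unfolding sig_def by simp

lemma sig1_le: assumes q: "q > 0" shows "sig 1 q \<le> real q * sig 0 q"
proof -
  have "sig 1 q = (\<Sum>d\<in>{d. d dvd q}. real d)" unfolding sig_def by simp
  also have "\<dots> \<le> (\<Sum>d\<in>{d. d dvd q}. real q)"
    using q by (intro sum_mono) (auto dest: dvd_imp_le)
  also have "\<dots> = real q * sig 0 q" unfolding sig_def by simp
  finally show ?thesis .
qed

lemma inv_sq_sum: "n \<ge> 1 \<Longrightarrow> (\<Sum>e=1..n. 1 / (real e)^2) \<le> 2 - 1 / real n"
proof (induction n rule: nat_induct_at_least)
  case base thus ?case by simp
next
  case (Suc n)
  have n: "real n \<ge> 1" using Suc by simp
  have "(\<Sum>e=1..Suc n. 1 / (real e)^2) = (\<Sum>e=1..n. 1 / (real e)^2) + 1 / (real n + 1)^2"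
    by simp
  also have "\<dots> \<le> 2 - 1 / real n + 1 / (real n + 1)^2" using Suc by simp
  also have "\<dots> \<le> 2 - 1 / (real n + 1)"
  proof -
    have le: "real n * (real n+1) \<le> (real n+1)^2" using n by (simp add: power2_eq_square algebra_simps)
    have "1 / (real n+1)^2 \<le> 1 / (real n * (real n+1))" using n le by (intro divide_left_mono) auto
    also have "1 / (real n * (real n+1)) = 1 / real n - 1 / (real n+1)" using n by (simp add: field_simps)
    finally have "1 / (real n + 1)^2 + 1 / (real n + 1) \<le> 1 / real n" by simp
    thus ?thesis by simp
  qed
  finally show ?case by (simp add: ac_simps)
qed

lemma sigj_le: assumes q: "q > 0" and j: "j \<ge> 2" shows "sig j q \<le> 2 * real q ^ j"
proof -
  let ?D = "{d. d dvd q}"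
  have "sig j q = (\<Sum>e\<in>?D. real (q div e) ^ j)"
    unfolding sig_def
    by (rule sum.reindex_bij_witness[of _ "\<lambda>e. q div e" "\<lambda>e. q div e"])
       (auto simp: q div_div_eq_right dvd_div_eq_mult elim!: dvdE)
  also have "\<dots> \<le> (\<Sum>e\<in>?D. real q ^ j * (1 / (real e)^2))"
  proof (intro sum_mono)
    fix e assume e: "e \<in> ?D"
    hence e1: "real e \<ge> 1" using q by (cases e) auto
    have "real (q div e) = real q / real e" using e by (auto simp: real_of_nat_div)
    hence "real (q div e) ^ j = real q ^ j / real e ^ j" by (simp add: power_divide)
    also have "\<dots> \<le> real q ^ j / real e ^ 2"
      using e1 j by (intro divide_left_mono power_increasing) auto
    finally show "real (q div e) ^ j \<le> real q ^ j * (1 / (real e)^2)" by simp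
  qed
  also have "\<dots> = real q ^ j * (\<Sum>e\<in>?D. 1 / (real e)^2)" by (simp add: sum_distrib_left)
  also have "\<dots> \<le> real q ^ j * (\<Sum>e=1..q. 1 / (real e)^2)"
    using q by (intro mult_left_mono sum_mono2) (auto dest: dvd_imp_le intro: Nat.gr0I)
  also have "\<dots> \<le> real q ^ j * 2"
  proof (intro mult_left_mono)
    have "(\<Sum>e=1..q. 1 / (real e)^2) \<le> 2 - 1 / real q" using q by (intro inv_sq_sum) auto
    thus "(\<Sum>e=1..q. 1 / (real e)^2) \<le> 2" by (smt (verit) divide_nonneg_nonneg of_nat_0_le_iff)
  qed simp
  finally show ?thesis by simp
qed

lemma divisor_sigma_eq: "q > 0 \<Longrightarrow> divisor_sigma 0 q = sig 0 q \<and> divisor_sigma 1 q = sig 1 q"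
proof -
  assume q: "q > 0"
  have "\<And>d. d \<in> {d. d dvd q} \<Longrightarrow> d \<noteq> 0" using q by auto
  thus ?thesis unfolding divisor_sigma_def sig_def by (intro conjI sum.cong refl) auto
qed

lemma harm_le: "r \<ge> 1 \<Longrightarrow> harmonic_num r \<le> 1 + ln (real r)"
proof -
  assume r: "r \<ge> 1"
  then obtain m where m: "r = Suc m" by (cases r) auto
  have "harm (Suc m) - ln (real (Suc m)) \<le> harm (Suc 0) - ln (real (Suc 0))"
    using decseq_harm_diff_ln unfolding decseq_def by blast
  hence "harm r \<le> 1 + ln (real r)" using m by (simp add: harm_def)
  moreover have "harmonic_num r = harm r" unfolding harmonic_num_def harm_def by (simp add: divide_inverse)
  ultimately show ?thesis by simp
qed

lemma harm_ge1: "r \<ge> 1 \<Longrightarrow> harmonic_num r \<ge> 1"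
proof -
  assume r: "r \<ge> 1"
  have "(\<Sum>d\<in>{1}. 1 / real d) \<le> (\<Sum>d=1..r. 1 / real d)" using r by (intro sum_mono2) auto
  thus ?thesis unfolding harmonic_num_def by simp
qed


lemma Tm_1: "Tm A 1 = A 0" by (simp add: numeral_eq_Suc)
lemma Tm_2: "Tm A 2 = (A 0)^2 + A 1" by (simp add: numeral_eq_Suc power2_eq_square)
lemma Tm_3: "Tm A 3 = (A 0)^3 + 3 * A 0 * A 1 + A 2"
  by (simp add: numeral_eq_Suc power3_eq_cube algebra_simps)


lemma aux_S1: "(q::real) > 0 \<Longrightarrow> (2 * H / q)^5 * q^3 = 32 * H^5 / q^2"
proof -
  assume q: "q > 0"
  have e1: "(2*H/q)^5 * q^3 = (32*H^5*q^3)/(q^5)" by (simp add: power_divide power_mult_distrib)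
  have e2: "(q::real)^5 = q^2 * q^3" by simp
  have e3: "(32*H^5*q^3)/(q^2*q^3) = 32*H^5/q^2" using q by (intro nonzero_mult_divide_mult_cancel_right) simp
  show ?thesis unfolding e1 e2 e3 ..
qed
lemma aux_S2: "(q::real) > 0 \<Longrightarrow> q * (4 * (d * (H * s / q)))^2 = H^2 * (16 * d^2 * s^2) / q"
proof -
  assume q: "q > 0"
  have "q * (4 * (d * (H * s / q)))^2 = q * (16 * d^2 * H^2 * s^2) / (q * q)"
    by (simp add: power_divide power_mult_distrib power2_eq_square)
  also have "\<dots> = H^2 * (16 * d^2 * s^2) / q" using q by (simp add: algebra_simps)
  finally show ?thesis .
qed
lemma aux_S3: "(q::real) > 0 \<Longrightarrow> qd = q * Q1 \<Longrightarrow> qd * (e + (2*H/q)*9 + (2*H/q)^2*(9*q)) = Q1*(q*e) + Q1*(18*H) + Q1*(36*H^2)"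
proof -
  assume q: "q > 0" and qd: "qd = q * Q1"
  have a: "q * (2*H/q) = 2 * H" using q by simp
  have b: "q * ((2*H/q)^2 * q) = 4 * H^2" using q by (simp add: power2_eq_square)
  have "qd * (e + (2*H/q)*9 + (2*H/q)^2*(9*q)) = Q1 * (q*e) + Q1 * (9 * (q * (2*H/q))) + Q1 * (9 * (q * ((2*H/q)^2 * q)))"
    unfolding qd by (simp add: algebra_simps)
  also have "\<dots> = Q1*(q*e) + Q1*(18*H) + Q1*(36*H^2)" unfolding a b by simp
  finally show ?thesis .
qed

lemma final3:
  fixes x q H s0 s1 s2 :: real
  assumes x: "x \<ge> 2^24" and q: "q = x^12" and H1: "1 \<le> H" and H2: "H \<le> 2 * x^4"
    and s0: "0 \<le> s0" "s0 \<le> 256 * x^4" and s1: "0 \<le> s1" "s1 \<le> q * s0" and s2: "s2 \<le> 2 * q^2"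
  shows "(H * s0)^3 + 3 * (H * s0) * (H * s1) + H * s2 \<le> 393219 * q^2 * H"
proof -
  have x0: "x \<ge> 1" using x by simp
  have H0: "0 \<le> H" using H1 by simp
  have HH: "H^2 \<le> 4 * x^8"
  proof -
    have "H^2 \<le> (2 * x^4)^2" using H0 H2 by (intro power_mono) auto
    thus ?thesis by (simp add: power_mult_distrib flip: power_mult)
  qed
  have s03: "s0^3 \<le> 2^24 * x^12"
  proof -
    have "s0^3 \<le> (256 * x^4)^3" using s0 by (intro power_mono) auto
    thus ?thesis by (simp add: power_mult_distrib flip: power_mult)
  qed
  have x4: "2^26 \<le> x^4"
  proof -
    have "((2::real)^24)^4 \<le> x^4" using x by (intro power_mono) auto
    moreover have "(2::real)^26 \<le> (2^24)^4" by simp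
    ultimately show ?thesis by linarith
  qed
  have a: "H^2 * s0^3 \<le> q^2"
  proof -
    have "H^2 * s0^3 \<le> (4 * x^8) * (2^24 * x^12)" using HH s03 s0 by (intro mult_mono) auto
    also have "(4 * x^8) * (2^24 * x^12) = 2^26 * x^20" by (simp add: power_add[symmetric])
    also have "\<dots> \<le> x^4 * x^20" using x4 by (intro mult_right_mono) auto
    also have "x^4 * x^20 = q^2" unfolding q by (simp flip: power_add power_mult)
    finally show ?thesis .
  qed
  have t1: "(H * s0)^3 \<le> q^2 * H"
  proof -
    have "(H * s0)^3 = H * (H^2 * s0^3)" by (simp add: power_mult_distrib power2_eq_square power3_eq_cube)
    also have "\<dots> \<le> H * q^2" using a H0 by (rule mult_left_mono)
    finally show ?thesis by (simp add: mult.commute)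
  qed
  have b: "H * s0^2 \<le> 131072 * x^12"
  proof -
    have "H * s0^2 \<le> (2 * x^4) * (256 * x^4)^2"
      using H0 H2 s0 by (intro mult_mono power_mono) auto
    also have "(2 * x^4) * (256 * x^4)^2 = 131072 * x^12" by (simp add: power_mult_distrib flip: power_add power_mult)
    finally show ?thesis .
  qed
  have t2: "3 * (H * s0) * (H * s1) \<le> 393216 * q^2 * H"
  proof -
    have "3 * (H * s0) * (H * s1) \<le> 3 * (H * s0) * (H * (q * s0))"
      using H0 s0 s1 by (intro mult_left_mono) auto
    also have "\<dots> = (3 * H * q) * (H * s0^2)" by (simp add: power2_eq_square algebra_simps)
    also have "\<dots> \<le> (3 * H * q) * (131072 * x^12)"
      using b H0 q by (intro mult_left_mono) auto
    also have "\<dots> = 393216 * q^2 * H" unfolding q by (simp add: power2_eq_square algebra_simps)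
    finally show ?thesis .
  qed
  have t3: "H * s2 \<le> 2 * q^2 * H" using s2 H0 by (simp add: mult_left_mono mult.commute)
  show ?thesis using t1 t2 t3 by linarith
qed


lemma final4:
  fixes x q H s0 :: real and \<delta> :: nat and A :: "nat \<Rightarrow> real"
  assumes x: "x \<ge> 2^24" and q: "q = x^12" and H1: "1 \<le> H" and H2: "H \<le> 2 * x^4"
    and s0: "0 \<le> s0" "s0 \<le> 256 * x^4" and d4: "4 \<le> \<delta>" and dx: "real \<delta> \<le> 24 * x"
    and d2: "2^\<delta> \<le> q"
    and A0: "\<And>j. 0 \<le> A j"
    and Ab: "\<And>j. A j \<le> q^(Suc j) * ((if j \<le> 1 then H * s0 / q else 0) + 2 * H / q)"
  shows "Tm A \<delta> \<le> 56 * q^(\<delta>-1) * H^2"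
proof -
  define \<alpha> where "\<alpha> = H * s0 / q"
  define l where "l = 2 * H / q"
  define \<epsilon> where "\<epsilon> = \<alpha> + sqrt (real \<delta> * \<alpha>)"
  have x1: "x \<ge> 1" using x by simp
  have x0: "x > 0" using x1 by simp
  have q0: "q > 0" unfolding q using x0 by simp
  have H0: "0 \<le> H" using H1 by simp
  have a0: "0 \<le> \<alpha>" unfolding \<alpha>_def using H0 s0 q0 by simp
  have l0: "0 \<le> l" unfolding l_def using H0 q0 by simp
  have Hs: "H * s0 \<le> 512 * x^8"
  proof -
    have "H * s0 \<le> (2 * x^4) * (256 * x^4)" using H0 H2 s0 by (intro mult_mono) auto
    also have "\<dots> = 512 * x^8" by (simp flip: power_add)
    finally show ?thesis .
  qed
  have xpow: "\<And>k::nat. (2::real)^(24*k) \<le> x^k"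
  proof -
    fix k :: nat
    have "((2::real)^24)^k \<le> x^k" using x by (intro power_mono) auto
    thus "(2::real)^(24*k) \<le> x^k" by (simp add: power_mult)
  qed
  have N1': "real \<delta> * \<alpha> \<le> 1/4"
  proof -
    have "real \<delta> * (H * s0) \<le> (24 * x) * (512 * x^8)"
      by (rule mult_mono[OF dx Hs]) (use x0 H0 s0 in auto)
    also have "\<dots> = 12288 * x^9" by (simp add: power_Suc[symmetric] del: power_Suc)
    also have "\<dots> \<le> (x^3 / 4) * x^9"
    proof (intro mult_right_mono)
      have "(2::real)^(24*3) \<le> x^3" by (rule xpow)
      thus "12288 \<le> x^3 / 4" by simp
    qed (use x0 in simp)
    also have "\<dots> = q / 4" unfolding q by (simp flip: power_add)
    finally have "real \<delta> * (H * s0) \<le> q / 4" .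
    hence "real \<delta> * (H * s0) / q \<le> (q / 4) / q" using q0 by (intro divide_right_mono) auto
    thus ?thesis unfolding \<alpha>_def using q0 by simp
  qed
  have N1: "real \<delta> * \<alpha> \<le> 1" using N1' by simp
  have d3: "real \<delta> ^ 3 * \<alpha> \<le> 1"
  proof -
    have "real \<delta> ^ 3 * (H * s0) \<le> (24 * x)^3 * (512 * x^8)"
      by (rule mult_mono[OF power_mono[OF dx] Hs]) (use x0 H0 s0 in auto)
    also have "\<dots> = 7077888 * x^11" by (simp add: power_mult_distrib flip: power_add)
    also have "\<dots> \<le> x * x^11"
    proof (intro mult_right_mono)
      have "(2::real)^(24*1) \<le> x^1" by (rule xpow)
      thus "7077888 \<le> x" by simp
    qed (use x0 in simp)
    also have "\<dots> = q" unfolding q by (simp flip: power_Suc)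
    finally have "real \<delta> ^ 3 * (H * s0) \<le> q" .
    hence "real \<delta> ^ 3 * (H * s0) / q \<le> q / q" using q0 by (intro divide_right_mono) auto
    thus ?thesis unfolding \<alpha>_def using q0 by simp
  qed
  have d2s: "16 * real \<delta> ^ 2 * s0^2 \<le> q"
  proof -
    have a: "real \<delta> ^ 2 \<le> (24 * x)^2" by (rule power_mono[OF dx]) simp
    have b: "s0 ^ 2 \<le> (256 * x^4)^2" by (rule power_mono[OF s0(2) s0(1)])
    have "16 * real \<delta> ^ 2 * s0^2 \<le> 16 * (24 * x)^2 * (256 * x^4)^2"
      using mult_mono[OF a b] x0 by (simp add: mult.commute)
    also have "\<dots> = 603979776 * x^10" by (simp add: power_mult_distrib flip: power_add power_mult)
    also have "\<dots> \<le> x^2 * x^10"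
    proof (intro mult_right_mono)
      have "(2::real)^(24*2) \<le> x^2" by (rule xpow)
      thus "603979776 \<le> x^2" by simp
    qed (use x0 in simp)
    also have "\<dots> = q" unfolding q by (simp flip: power_add)
    finally show ?thesis .
  qed
  have N2: "l * (3/2)^\<delta> \<le> 1"
  proof -
    have c5: "((3/2::real)^\<delta>)^5 \<le> q^3"
    proof -
      have "((3/2::real)^\<delta>)^5 = ((3/2)^5)^\<delta>" by (simp only: power_mult[symmetric] mult.commute)
      also have "\<dots> = (243/32)^\<delta>" by (simp add: power_divide)
      also have "\<dots> \<le> 8^\<delta>" by (intro power_mono) auto
      also have "(8::real)^\<delta> = (2^3)^\<delta>" by simp
      also have "\<dots> = (2^\<delta>)^3" by (simp only: power_mult[symmetric] mult.commute)
      also have "\<dots> \<le> q^3" using d2 by (intro power_mono) auto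
      finally show ?thesis .
    qed
    have "(l * (3/2)^\<delta>)^5 = l^5 * ((3/2)^\<delta>)^5" by (simp add: power_mult_distrib)
    also have "\<dots> \<le> l^5 * q^3" using c5 l0 by (intro mult_left_mono) auto
    also have "l^5 * q^3 = 32 * H^5 / q^2" unfolding l_def using q0 by (rule aux_S1)
    also have "\<dots> \<le> 1"
    proof -
      have "32 * H^5 \<le> 32 * (2 * x^4)^5" using H0 H2 by (intro mult_left_mono power_mono) auto
      also have "\<dots> = 1024 * x^20" by (simp add: power_mult_distrib flip: power_mult)
      also have "\<dots> \<le> x^4 * x^20"
      proof (intro mult_right_mono)
        have "(2::real)^(24*4) \<le> x^4" by (rule xpow)
        thus "1024 \<le> x^4" by simp
      qed (use x0 in simp)
      also have "\<dots> = q^2" unfolding q by (simp flip: power_add power_mult)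
      finally show ?thesis using q0 by simp
    qed
    finally have "(l * (3/2)^\<delta>)^5 \<le> 1" .
    thus ?thesis using l0 by (simp add: power_le_one_iff)
  qed
  define s where "s = sqrt (real \<delta> * \<alpha>)"
  have s0': "0 \<le> s" unfolding s_def using a0 by simp
  have ss: "s^2 = real \<delta> * \<alpha>" unfolding s_def using a0 by simp
  have es: "\<epsilon> = \<alpha> + s" unfolding \<epsilon>_def s_def ..
  have e0: "0 \<le> \<epsilon>" using es a0 s0' by simp
  have as: "\<alpha> \<le> s"
  proof -
    have d1: "1 \<le> real \<delta>" using d4 by simp
    have "\<alpha> \<le> real \<delta> * \<alpha>" using d1 a0 by (simp add: mult_left_le_one_le mult_le_cancel_right1)
    hence a1: "\<alpha> \<le> 1" using N1 by simp
    have "\<alpha>^2 \<le> real \<delta> * \<alpha>" using a1 a0 d1 unfolding power2_eq_square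
      by (intro mult_mono) auto
    thus ?thesis unfolding s_def by (rule real_le_rsqrt)
  qed
  have e2: "\<epsilon>^2 \<le> 4 * (real \<delta> * \<alpha>)"
  proof -
    have "\<epsilon> \<le> 2 * s" using es as by simp
    hence "\<epsilon>^2 \<le> (2 * s)^2" using e0 by (intro power_mono) auto
    thus ?thesis using ss by (simp add: power_mult_distrib)
  qed
  have N3: "\<epsilon> \<le> 1"
  proof -
    have "\<epsilon>^2 \<le> 1" using e2 N1' by simp
    thus ?thesis using e0 by (simp add: power_le_one_iff)
  qed
  have N4: "real \<delta> * \<epsilon> \<le> 2"
  proof -
    have "(real \<delta> * \<epsilon>)^2 = real \<delta>^2 * \<epsilon>^2" by (simp add: power_mult_distrib)
    also have "\<dots> \<le> real \<delta>^2 * (4 * (real \<delta> * \<alpha>))" using e2 by (intro mult_left_mono) auto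
    also have "\<dots> = 4 * (real \<delta>^3 * \<alpha>)" by (simp add: power2_eq_square power3_eq_cube)
    also have "\<dots> \<le> 2^2" using d3 by simp
    finally show ?thesis by (rule power2_le_imp_le) simp
  qed
  have N5: "q * \<epsilon>^4 \<le> H^2"
  proof -
    have "\<epsilon>^4 = (\<epsilon>^2)^2" by (simp flip: power_mult)
    also have "\<dots> \<le> (4 * (real \<delta> * \<alpha>))^2" using e2 e0 by (intro power_mono) auto
    finally have "q * \<epsilon>^4 \<le> q * (4 * (real \<delta> * \<alpha>))^2" using q0 by (intro mult_left_mono) auto
    also have "q * (4 * (real \<delta> * \<alpha>))^2 = H^2 * (16 * real \<delta>^2 * s0^2) / q"
      unfolding \<alpha>_def using q0 by (rule aux_S2)
    also have "\<dots> \<le> H^2 * q / q" using d2s H0 q0 by (intro divide_right_mono mult_left_mono) auto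
    also have "\<dots> = H^2" using q0 by simp
    finally show ?thesis .
  qed
  have maj: "Tm A \<delta> \<le> q^\<delta> * (\<epsilon>^\<delta> + l * (1+\<epsilon>)^\<delta> + l^2 * (2+\<epsilon>)^\<delta>)"
  proof (rule majorant[OF q0 a0 l0 N1 N2 \<epsilon>_def A0])
    fix j show "A j \<le> q ^ Suc j * ((if j \<le> 1 then \<alpha> else 0) + l)"
      using Ab[of j] unfolding \<alpha>_def l_def .
  qed (rule order_refl)
  have P1: "\<epsilon>^\<delta> \<le> \<epsilon>^4" using e0 N3 d4 by (intro power_decreasing) auto
  have P2: "(1+\<epsilon>)^\<delta> \<le> 9"
  proof -
    have "(1+\<epsilon>)^\<delta> \<le> (exp \<epsilon>)^\<delta>" using e0 by (intro power_mono) auto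
    also have "\<dots> = exp (real \<delta> * \<epsilon>)" by (simp add: exp_of_nat_mult)
    also have "\<dots> \<le> exp 2" using N4 by simp
    also have "exp (2::real) = exp 1 * exp 1" by (simp flip: exp_add)
    also have "\<dots> \<le> 3 * 3" using exp_le by (intro mult_mono) auto
    finally show ?thesis by simp
  qed
  have P3: "(2+\<epsilon>)^\<delta> \<le> 9 * q"
  proof -
    have "(2+\<epsilon>)^\<delta> \<le> (2 * (1+\<epsilon>))^\<delta>" using e0 by (intro power_mono) auto
    also have "\<dots> = 2^\<delta> * (1+\<epsilon>)^\<delta>" by (simp only: power_mult_distrib)
    also have "\<dots> \<le> q * 9" using d2 P2 e0 q0 by (intro mult_mono) auto
    finally show ?thesis by simp
  qed
  define Q1 where "Q1 = q^(\<delta>-1)"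
  have Q10: "0 \<le> Q1" unfolding Q1_def using q0 by simp
  have qd: "q^\<delta> = q * Q1" unfolding Q1_def using d4 by (simp flip: power_Suc)
  have "q^\<delta> * (\<epsilon>^\<delta> + l * (1+\<epsilon>)^\<delta> + l^2 * (2+\<epsilon>)^\<delta>)
      \<le> q^\<delta> * (\<epsilon>^4 + l * 9 + l^2 * (9 * q))"
    using P1 P2 P3 l0 q0 by (intro mult_left_mono add_mono mult_left_mono) auto
  also have "\<dots> = Q1 * (q * \<epsilon>^4) + Q1 * (18 * H) + Q1 * (36 * H^2)"
    unfolding l_def by (rule aux_S3[OF q0 qd])
  also have "\<dots> \<le> Q1 * H^2 + Q1 * (18 * H^2) + Q1 * (36 * H^2)"
  proof -
    have "H \<le> H^2" using H1 by (simp add: power2_eq_square)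
    thus ?thesis using N5 Q10 by (intro add_mono mult_left_mono) auto
  qed
  also have "\<dots> \<le> 56 * Q1 * H^2" using Q10 H0 by (simp add: algebra_simps)
  finally show ?thesis using maj unfolding Q1_def by simp
qed


lemma ln2_ge: "ln (2::real) \<ge> 1/2"
proof -
  have "exp (1/2::real) * exp (1/2) = exp 1" by (simp flip: exp_add)
  also have "\<dots> \<le> 3" by (rule exp_le)
  finally have h: "exp (1/2::real) * exp (1/2) \<le> 3" .
  have "exp (1/2::real) < 2"
  proof (rule ccontr)
    assume "\<not> exp (1/2::real) < 2"
    hence "2 \<le> exp (1/2::real)" by simp
    hence "2 * 2 \<le> exp (1/2::real) * exp (1/2)" by (intro mult_mono) auto
    thus False using h by simp
  qed
  hence "ln (exp (1/2::real)) < ln 2" by (subst ln_less_cancel_iff) auto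
  thus ?thesis by simp
qed

lemma params:
  fixes q r \<delta> :: nat
  assumes q: "q \<ge> 2^288" and r: "1 \<le> r" and rq: "real r \<le> exp (real q powr (1/3))"
    and dq: "real \<delta> \<le> ln (real q) / ln 2"
  shows "\<exists>x::real. x \<ge> 2^24 \<and> real q = x^12 \<and> harmonic_num r \<le> 2 * x^4 \<and>
           sig 0 q \<le> 256 * x^4 \<and> real \<delta> \<le> 24 * x \<and> 2^\<delta> \<le> real q"
proof -
  define x where "x = real q powr (1/12)"
  have q0: "real q > 0" using q by (simp add: Nat.gr0I)
  have x0: "0 \<le> x" unfolding x_def by simp
  have x12: "x^12 = real q" unfolding x_def using q0 by (simp add: powr_power)
  have x1: "x \<ge> 2^24"
  proof -
    have "((2::real)^24)^12 = 2^288" by simp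
    also have "\<dots> \<le> real q" using q by (metis numeral_power_le_of_nat_cancel_iff of_nat_numeral)
    finally have "((2::real)^24)^Suc 11 \<le> x^Suc 11" using x12 by simp
    thus ?thesis using x0 by (rule power_le_imp_le_base)
  qed
  have xge1: "x \<ge> 1"
  proof -
    have "(1::real) \<le> 2^24" by simp
    thus ?thesis using x1 by linarith
  qed
  have x4: "real q powr (1/3) = x^4" unfolding x_def using q0 by (simp add: powr_power)
  have H: "harmonic_num r \<le> 2 * x^4"
  proof -
    have "ln (real r) \<le> ln (exp (real q powr (1/3)))" using r rq by (subst ln_le_cancel_iff) auto
    hence "ln (real r) \<le> x^4" using x4 by simp
    moreover have "1 \<le> x^4" using xge1 by (simp add: one_le_power)
    ultimately show ?thesis using harm_le[OF r] by simp
  qed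
  have S: "sig 0 q \<le> 256 * x^4"
  proof -
    have qp: "q > 0" using q0 by simp
    have h: "card {d. d dvd q} ^ 3 \<le> 2^24 * q" using qp by (rule dcount_bound)
    have "real (card {d. d dvd q} ^ 3) \<le> real (2^24 * q)" using h by (simp only: of_nat_le_iff)
    hence h2: "real (card {d. d dvd q}) ^ 3 \<le> 2^24 * real q" by simp
    have e: "(256 * x^4)^3 = 2^24 * x^12"
    proof -
      have "(256 * x^4)^3 = 256^3 * (x^4)^3" by (simp only: power_mult_distrib)
      also have "(x^4)^3 = x^12" by (simp only: power_mult[symmetric]) simp
      finally show ?thesis by simp
    qed
    have c3: "(sig 0 q) ^ 3 \<le> (256 * x^4) ^ 3"
      unfolding e sig0_eq[OF qp] x12 using h2 by simp
    show ?thesis by (rule power_le_imp_le_base[of _ 2]) (use c3 x0 in simp_all)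
  qed
  have l2: "ln (2::real) > 0" by simp
  have D: "real \<delta> \<le> 24 * x"
  proof -
    have "ln (real q) = 12 * ln x" using x12[symmetric] x1 by (simp add: ln_realpow)
    also have "\<dots> \<le> 12 * x" using ln_le_minus_one[of x] x1 by simp
    finally have lq: "ln (real q) \<le> 12 * x" .
    have "ln (real q) / ln 2 \<le> 12 * x / ln 2" using lq l2 by (intro divide_right_mono) auto
    also have "\<dots> \<le> 12 * x / (1/2)" using ln2_ge x0 by (intro divide_left_mono) auto
    finally show ?thesis using dq by simp
  qed
  have P: "2^\<delta> \<le> real q"
  proof -
    have "real \<delta> * ln 2 \<le> ln (real q)" using dq l2 by (simp add: pos_le_divide_eq)
    hence "ln (2^\<delta>) \<le> ln (real q)" by (simp add: ln_realpow)
    thus ?thesis using q0 by (subst (asm) ln_le_cancel_iff) auto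
  qed
  show ?thesis using x1 x12 H S D P by auto
qed


lemma Ab_check:
  fixes q H :: real and A :: "nat \<Rightarrow> real"
  assumes q: "q > 0" and H: "0 \<le> H" and A: "A = (\<lambda>j. H * sig j qn)" and qq: "q = real qn" and qn: "qn > 0"
  shows "A j \<le> q^(Suc j) * ((if j \<le> 1 then H * sig 0 qn / q else 0) + 2 * H / q)"
proof -
  have s0: "0 \<le> sig 0 qn" by (rule sig_nonneg)
  consider "j = 0" | "j = 1" | "j \<ge> 2" by linarith
  thus ?thesis
  proof cases
    case 1
    have "q^(Suc j) * ((if j \<le> 1 then H * sig 0 qn / q else 0) + 2 * H / q) = H * sig 0 qn + 2 * H"
      using 1 q by (simp add: field_simps)
    thus ?thesis using 1 A H by simp
  next
    case 2
    have "q^(Suc j) * ((if j \<le> 1 then H * sig 0 qn / q else 0) + 2 * H / q) = q * (H * sig 0 qn) + 2 * q * H"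
      using 2 q by (simp add: field_simps power2_eq_square)
    moreover have "H * sig 1 qn \<le> H * (q * sig 0 qn)" using sig1_le[OF qn] H qq by (intro mult_left_mono) auto
    moreover have "0 \<le> 2 * q * H" using q H by simp
    ultimately show ?thesis using 2 A by (simp add: algebra_simps)
  next
    case 3
    hence nj: "\<not> j \<le> 1" by simp
    have "A j = H * sig j qn" using A by simp
    also have "\<dots> \<le> H * (2 * q^j)" using sigj_le[OF qn 3] H qq by (intro mult_left_mono) auto
    also have "H * (2 * q^j) = q * q^j * (2 * H / q)" using q by (simp add: field_simps)
    also have "\<dots> = q^(Suc j) * ((if j \<le> 1 then H * sig 0 qn / q else 0) + 2 * H / q)"
      using nj by simp
    finally show ?thesis .
  qed
qed

theorem lemma6p1:
  "\<exists>(q0::nat) (C::real). C > 0 \<and>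
    (\<forall>(q::nat) (r::nat) (\<delta>::nat) (n::nat).
       q \<ge> q0 \<longrightarrow> 1 \<le> r \<longrightarrow> real r \<le> exp (real q powr (1/3)) \<longrightarrow>
       1 \<le> \<delta> \<longrightarrow> real \<delta> \<le> ln (real q) / ln 2 \<longrightarrow> 0 < n \<longrightarrow>
       (1 / fact n) * (\<Sum>\<pi>\<in>{\<pi>. \<pi> permutes {..<n}}.
            (real (\<Sum>d=1..r. cycle_count n (\<pi> ^^ q) d)) ^ \<delta>)
       \<le> (if \<delta> = 1 then C * divisor_sigma 0 q * harmonic_num r
          else if \<delta> = 2 then C * ((divisor_sigma 0 q)\<^sup>2 * (harmonic_num r)\<^sup>2
                                   + divisor_sigma 1 q * harmonic_num r)
          else if \<delta> = 3 then C * (real q)\<^sup>2 * harmonic_num r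
          else C * real q ^ (\<delta> - 1) * (harmonic_num r)\<^sup>2))"
proof (rule exI[of _ "2^288::nat"], rule exI[of _ "400000::real"], intro conjI allI impI)
  fix q r \<delta> n :: nat
  assume hq: "2^288 \<le> q" and hr: "1 \<le> r" and hrq: "real r \<le> exp (real q powr (1/3))"
    and hd1: "1 \<le> \<delta>" and hd: "real \<delta> \<le> ln (real q) / ln 2" and hn: "0 < n"
  define H where "H = harmonic_num r"
  define A where "A = (\<lambda>j. H * sig j q)"
  define LHS where "LHS = (1 / fact n) * (\<Sum>\<pi>\<in>{\<pi>. \<pi> permutes {..<n}}.
            (real (\<Sum>d=1..r. cycle_count n (\<pi> ^^ q) d)) ^ \<delta>)"
  have qp: "q > 0" using hq by (auto intro: Nat.gr0I)
  have rq0: "real q > 0" using qp by simp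
  have main: "LHS \<le> Tm A \<delta>" unfolding LHS_def A_def H_def by (rule main_moment_bound[OF qp])
  obtain x where x1: "x \<ge> 2^24" and x12: "real q = x^12" and xH: "harmonic_num r \<le> 2 * x^4"
    and xs: "sig 0 q \<le> 256 * x^4" and xd: "real \<delta> \<le> 24 * x" and x2: "2^\<delta> \<le> real q"
    using params[OF hq hr hrq hd] by blast
  have H1: "1 \<le> H" unfolding H_def by (rule harm_ge1[OF hr])
  have H0: "0 \<le> H" using H1 by simp
  have s0: "0 \<le> sig 0 q" by (rule sig_nonneg)
  have s1: "0 \<le> sig 1 q" by (rule sig_nonneg)
  have ds: "divisor_sigma 0 q = sig 0 q" "divisor_sigma 1 q = sig 1 q" using divisor_sigma_eq[OF qp] by auto
  consider "\<delta> = 1" | "\<delta> = 2" | "\<delta> = 3" | "\<delta> \<ge> 4" using hd1 by linarith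
  hence "LHS \<le> (if \<delta> = 1 then 400000 * divisor_sigma 0 q * harmonic_num r
          else if \<delta> = 2 then 400000 * ((divisor_sigma 0 q)\<^sup>2 * (harmonic_num r)\<^sup>2
                                   + divisor_sigma 1 q * harmonic_num r)
          else if \<delta> = 3 then 400000 * (real q)\<^sup>2 * harmonic_num r
          else 400000 * real q ^ (\<delta> - 1) * (harmonic_num r)\<^sup>2)"
  proof cases
    case 1
    have "Tm A \<delta> = H * sig 0 q" using 1 unfolding A_def by (simp add: Tm_1)
    also have "\<dots> \<le> 400000 * (H * sig 0 q)" using H0 s0 by simp
    finally show ?thesis using main 1 ds unfolding H_def by (simp add: algebra_simps)
  next
    case 2
    have "Tm A \<delta> = (H * sig 0 q)^2 + H * sig 1 q" using 2 unfolding A_def by (simp add: Tm_2)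
    also have "\<dots> \<le> 400000 * ((H * sig 0 q)^2 + H * sig 1 q)" using H0 s0 s1 by simp
    finally show ?thesis using main 2 ds unfolding H_def by (simp add: algebra_simps power_mult_distrib)
  next
    case 3
    have "Tm A \<delta> = (H * sig 0 q)^3 + 3 * (H * sig 0 q) * (H * sig 1 q) + H * sig 2 q"
      using 3 unfolding A_def by (simp add: Tm_3)
    also have "\<dots> \<le> 393219 * (real q)^2 * H"
      by (rule final3[OF x1 x12 H1 _ s0 xs s1 sig1_le[OF qp] sigj_le[OF qp]]) (use xH H_def in auto)
    also have "\<dots> \<le> 400000 * (real q)^2 * H" using H0 by (intro mult_right_mono) auto
    finally show ?thesis using main 3 unfolding H_def by simp
  next
    case 4
    have "Tm A \<delta> \<le> 56 * real q ^ (\<delta> - 1) * H^2"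
    proof (rule final4[OF x1 x12 H1 _ s0 xs 4 xd x2])
      show "H \<le> 2 * x^4" using xH H_def by simp
      fix j show "0 \<le> A j" unfolding A_def using H0 sig_nonneg by simp
      show "A j \<le> real q ^ Suc j * ((if j \<le> 1 then H * sig 0 q / real q else 0) + 2 * H / real q)"
        by (rule Ab_check[OF rq0 H0 A_def refl qp])
    qed
    also have "\<dots> \<le> 400000 * real q ^ (\<delta> - 1) * H^2" using H0 rq0 by (intro mult_right_mono) auto
    finally show ?thesis using main 4 unfolding H_def by simp
  qed
  thus "(1 / fact n) * (\<Sum>\<pi>\<in>{\<pi>. \<pi> permutes {..<n}}.
            (real (\<Sum>d=1..r. cycle_count n (\<pi> ^^ q) d)) ^ \<delta>)
       \<le> (if \<delta> = 1 then 400000 * divisor_sigma 0 q * harmonic_num r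
          else if \<delta> = 2 then 400000 * ((divisor_sigma 0 q)\<^sup>2 * (harmonic_num r)\<^sup>2
                                   + divisor_sigma 1 q * harmonic_num r)
          else if \<delta> = 3 then 400000 * (real q)\<^sup>2 * harmonic_num r
          else 400000 * real q ^ (\<delta> - 1) * (harmonic_num r)\<^sup>2)" unfolding LHS_def .
qed simp


end
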